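(* Assume (H1). There exist constants $\kappa,\delta_0\in(0,1]$ such that for every $\theta>1/d$ there is a $[1,\infty]$-valued random variable $R_0$, finite $\mathbb P$-a.s., such that for $\mathbb P$-a.e. $\omega$ and all $R>R_0(\omega)$, $$\mu\big(B^{x_1,x_2}_{r,\delta_0}(y)\big)\ge\kappa\,\mu(B_r(y))$$ for all $x_1,x_2,y\in B_R$ with $x_1\neq x_2$ and all $r\in[\log^\theta R,\,R]$.
   Context: Assumption (H1): on a probability space $(\Omega,\mathcal F,\mathbb P)$, $\{w_{x,y}\}$, indexed by unordered pairs of distinct points of $\mathbb Z^d$, are i.i.d. non-negative random variables with $w_{x,y}=w_{y,x}$, $\mathbb E[w_{x,y}]=1$ and $w_{x,y}\le M$ for a constant $M>0$. Here $d\ge1$, $\mu$ is counting measure on $\mathbb Z^d$, $B_R(y)=(y+(-R,R]^d)\cap\mathbb Z^d$, $B_R=B_R(0)$, and for $x_1,x_2,y\in\mathbb Z^d$, $\delta,R>0$: $B^{x_1,x_2}_{R,\delta}(y)=\{z\in B_R(y)\setminus\{x_1,x_2\}:\ w_{x_1,z}>\delta,\ w_{x_2,z}>\delta\}$. *)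

theory Defs
  imports "HOL-Probability.Probability"
begin

text \<open>Points of Z^d are vectors of type int^'d, d = CARD('d).\<close>

definition unordered_pairs :: "('a set) set" where
  "unordered_pairs = {{x, y} | x y. x \<noteq> y}"

definition box :: "real \<Rightarrow> int^'d \<Rightarrow> (int^'d) set" where
  "box R y = {z. \<forall>i. - R < real_of_int (z$i - y$i) \<and> real_of_int (z$i - y$i) \<le> R}"

definition Bdelta :: "((int^'d) set \<Rightarrow> real) \<Rightarrow> real \<Rightarrow> real \<Rightarrow> int^'d \<Rightarrow> int^'d \<Rightarrow> int^'d \<Rightarrow> (int^'d) set" where
  "Bdelta w R \<delta> x1 x2 y = {z \<in> box R y - {x1, x2}. w {x1, z} > \<delta> \<and> w {x2, z} > \<delta>}"

end

theory Submission
  imports Defs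
begin


lemma card_filter_sum: "finite I \<Longrightarrow> real (card {z\<in>I. P z}) = (\<Sum>z\<in>I. if P z then 1 else 0)"
  by (simp add: sum.If_cases Int_def conj_commute)

definition seg :: "real \<Rightarrow> int set" where "seg r = {t. - r < real_of_int t \<and> real_of_int t \<le> r}"

lemma finite_seg: "finite (seg r)"
proof -
  have "seg r \<subseteq> {-\<lceil>r\<rceil>..\<lceil>r\<rceil>}" unfolding seg_def by (auto, linarith+)
  then show ?thesis by (rule finite_subset) simp
qed

lemma box_seg: "box r y = {z. \<forall>i. z$i - y$i \<in> seg r}" unfolding box_def seg_def by simp

lemma box_image: "box r y = (\<lambda>f. \<chi> i. y$i + f i) ` (PiE UNIV (\<lambda>_. seg r))"
proof (rule set_eqI, rule iffI)
  fix z assume "z \<in> box r y"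
  then have h1: "(\<lambda>i. z$i - y$i) \<in> PiE UNIV (\<lambda>_. seg r)" unfolding box_seg by (simp add: PiE_iff)
  have h2: "z = (\<chi> i. y$i + (z$i - y$i))" by (simp add: vec_eq_iff)
  show "z \<in> (\<lambda>f. \<chi> i. y$i + f i) ` (PiE UNIV (\<lambda>_. seg r))" using h1 by (rule rev_image_eqI) (simp add: vec_eq_iff)
next
  fix z assume "z \<in> (\<lambda>f. \<chi> i. y$i + f i) ` (PiE UNIV (\<lambda>_. seg r))"
  then obtain f where f: "f \<in> PiE UNIV (\<lambda>_. seg r)" and z: "z = (\<chi> i. y$i + f i)" by blast
  have "z$i - y$i \<in> seg r" for i using f unfolding z by (simp add: PiE_iff)
  then show "z \<in> box r y" unfolding box_seg by simp
qed

lemma card_box: "card (box r (y::int^'d)) = card (seg r) ^ CARD('d)"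
proof -
  have inj: "inj_on (\<lambda>f. \<chi> i. y$i + f i) (PiE UNIV (\<lambda>_. seg r))"
  proof (rule inj_onI)
    fix f g :: "'d \<Rightarrow> int" assume "(\<chi> i. y$i + f i) = ((\<chi> i. y$i + g i) :: int^'d)"
    then have "(\<chi> i. y$i + f i) $ i = ((\<chi> i. y$i + g i) :: int^'d) $ i" for i by simp
    then have "f i = g i" for i by simp
    then show "f = g" by (rule ext)
  qed
  have "card (box r y) = card (PiE (UNIV::'d set) (\<lambda>_. seg r))"
    unfolding box_image by (rule card_image[OF inj])
  also have "\<dots> = card (seg r) ^ CARD('d)" by (simp add: card_PiE)
  finally show ?thesis .
qed

lemma finite_box: "finite (box r (y::int^'d))"
  unfolding box_image by (intro finite_imageI finite_PiE finite_seg) auto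

lemma seg_half: "seg (real m / 2) = {int m div 2 - int m + 1 .. int m div 2}"
proof -
  have "seg (real m / 2) = {t. - int m < 2 * t \<and> 2 * t \<le> int m}"
  proof (rule set_eqI)
    fix t :: int
    have a: "(- (real m / 2) < real_of_int t) \<longleftrightarrow> real_of_int (- int m) < real_of_int (2 * t)" by simp linarith
    have b: "(real_of_int t \<le> real m / 2) \<longleftrightarrow> real_of_int (2*t) \<le> real_of_int (int m)" by simp linarith
    show "t \<in> seg (real m / 2) \<longleftrightarrow> t \<in> {t. - int m < 2 * t \<and> 2 * t \<le> int m}"
      unfolding seg_def mem_Collect_eq a b of_int_less_iff of_int_le_iff ..
  qed
  also have "\<dots> = {int m div 2 - int m + 1 .. int m div 2}"
  proof -
    have h: "int m = 2*(int m div 2) + int m mod 2" "0 \<le> int m mod 2" "int m mod 2 < 2" by auto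
    show ?thesis using h by (auto; linarith)
  qed
  finally show ?thesis .
qed

lemma aux: assumes f1: "real_of_int \<lfloor>r\<rfloor> < r" and f2: "r < real_of_int \<lfloor>r\<rfloor> + 1"
  shows "(- r < real_of_int t \<and> real_of_int t \<le> r) \<longleftrightarrow> (- \<lfloor>r\<rfloor> \<le> t \<and> t \<le> \<lfloor>r\<rfloor>)"
proof -
  have 1: "real_of_int t \<le> r \<longleftrightarrow> t \<le> \<lfloor>r\<rfloor>" by (simp add: le_floor_iff)
  have 2: "- r < real_of_int t \<longleftrightarrow> - \<lfloor>r\<rfloor> \<le> t"
  proof
    assume "- r < real_of_int t"
    show "- \<lfloor>r\<rfloor> \<le> t"
    proof (rule ccontr)
      assume "\<not> - \<lfloor>r\<rfloor> \<le> t"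
      then have "t \<le> - \<lfloor>r\<rfloor> - 1" by simp
      then have "real_of_int t \<le> real_of_int (- \<lfloor>r\<rfloor> - 1)" by (simp only: of_int_le_iff)
      then show False using \<open>- r < real_of_int t\<close> f2 by simp
    qed
  next
    assume "- \<lfloor>r\<rfloor> \<le> t"
    then have "real_of_int (- \<lfloor>r\<rfloor>) \<le> real_of_int t" by (simp only: of_int_le_iff)
    then show "- r < real_of_int t" using f1 by simp
  qed
  show ?thesis using 1 2 by blast
qed

lemma card_seg_half: "card (seg (real m / 2)) = m"
  unfolding seg_half by simp

lemma card_box_half: "card (box (real m / 2) (y::int^'d)) = m ^ CARD('d)"
  by (simp add: card_box card_seg_half)

lemma seg_eq_half: assumes "r \<ge> 0" shows "seg r = seg (real (nat (\<lfloor>r\<rfloor> + \<lceil>r\<rceil>)) / 2)"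
proof (cases "r \<in> \<int>")
  case True
  then obtain k where k: "r = of_int k" by (auto elim: Ints_cases)
  then show ?thesis using assms by (simp add: seg_def)
next
  case False
  then have "r \<noteq> real_of_int \<lfloor>r\<rfloor>" by (metis Ints_of_int)
  then have c: "\<lceil>r\<rceil> = \<lfloor>r\<rfloor> + 1" by (simp add: ceiling_altdef)
  have f1: "real_of_int \<lfloor>r\<rfloor> < r" using False by (metis Ints_of_int of_int_floor_le order_le_less)
  have f2: "r < real_of_int \<lfloor>r\<rfloor> + 1" by linarith
  have nn: "\<lfloor>r\<rfloor> \<ge> 0" using assms by simp
  show ?thesis unfolding seg_def c
  proof (rule set_eqI, simp only: mem_Collect_eq)
    fix t :: int
    have e: "real (nat (\<lfloor>r\<rfloor> + (\<lfloor>r\<rfloor> + 1))) / 2 = real_of_int \<lfloor>r\<rfloor> + 1/2" using nn by simp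
    have A: "(- r < real_of_int t \<and> real_of_int t \<le> r) \<longleftrightarrow> (- \<lfloor>r\<rfloor> \<le> t \<and> t \<le> \<lfloor>r\<rfloor>)"
      using aux[OF f1 f2] by blast
    have B: "(- (real_of_int \<lfloor>r\<rfloor> + 1/2) < real_of_int t \<and> real_of_int t \<le> real_of_int \<lfloor>r\<rfloor> + 1/2) \<longleftrightarrow> (- \<lfloor>r\<rfloor> \<le> t \<and> t \<le> \<lfloor>r\<rfloor>)"
      by linarith
    show "(- r < real_of_int t \<and> real_of_int t \<le> r) = (- (real (nat (\<lfloor>r\<rfloor> + (\<lfloor>r\<rfloor> + 1))) / 2) < real_of_int t \<and> real_of_int t \<le> real (nat (\<lfloor>r\<rfloor> + (\<lfloor>r\<rfloor> + 1))) / 2)"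
      unfolding e using A B by blast
  qed
qed


lemma box_eq_half: "r \<ge> 0 \<Longrightarrow> box r y = box (real (nat (\<lfloor>r\<rfloor> + \<lceil>r\<rceil>)) / 2) y"
  unfolding box_seg using seg_eq_half by metis

lemma box_mono: assumes "r \<le> s" shows "box r y \<subseteq> box s y"
proof
  fix z assume "z \<in> box r y"
  then have "\<forall>i. - r < real_of_int (z $ i - y $ i) \<and> real_of_int (z $ i - y $ i) \<le> r" by (simp add: box_def)
  then have "\<forall>i. - s < real_of_int (z $ i - y $ i) \<and> real_of_int (z $ i - y $ i) \<le> s"
  proof (intro allI)
    fix i assume h: "\<forall>i. - r < real_of_int (z $ i - y $ i) \<and> real_of_int (z $ i - y $ i) \<le> r"
    then have "- r < real_of_int (z $ i - y $ i) \<and> real_of_int (z $ i - y $ i) \<le> r" by blast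
    then show "- s < real_of_int (z $ i - y $ i) \<and> real_of_int (z $ i - y $ i) \<le> s" using assms by linarith
  qed
  then show "z \<in> box s y" by (simp add: box_def)
qed



lemma (in prob_space) key:
  fixes W :: "(int^'d) set \<Rightarrow> 'a \<Rightarrow> real" and S :: "(int^'d) set"
  assumes meas: "\<And>e. e \<in> unordered_pairs \<Longrightarrow> W e \<in> borel_measurable M"
    and ind: "indep_vars (\<lambda>_. borel) W unordered_pairs"
    and pe: "\<And>e. e \<in> unordered_pairs \<Longrightarrow> prob {\<omega>\<in>space M. W e \<omega> > 1/2} \<ge> p"
    and p: "0 < p"
    and x: "x1 \<noteq> x2" and S: "finite S" "real (card S) \<ge> 8"
  defines "bad \<equiv> {\<omega>\<in>space M. real (card {z\<in>S - {x1,x2}. W {x1,z} \<omega> > 1/2 \<and> W {x2,z} \<omega> > 1/2}) < p^2/4 * real (card S)}"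
  shows "bad \<in> events \<and> prob bad \<le> exp (- (p^4 * real (card S) / 2))"
proof -
  define I where "I = S - {x1,x2}"
  define X where "X = (\<lambda>z \<omega>. if W {x1,z} \<omega> > 1/2 \<and> W {x2,z} \<omega> > 1/2 then 1 else (0::real))"
  define K where "K = (\<lambda>z::int^'d. {{x1,z},{x2,z}})"
  have up1: "{x1,z} \<in> unordered_pairs" and up2: "{x2,z} \<in> unordered_pairs" if "z \<in> I" for z
    using that unfolding unordered_pairs_def I_def by auto
  have finI: "finite I" using S unfolding I_def by auto
  have "card S - card {x1,x2} \<le> card I" unfolding I_def by (rule diff_card_le_card_Diff) auto
  moreover have "card {x1,x2} = 2" using x by simp
  ultimately have cI1: "real (card S) - 2 \<le> real (card I)" using S by linarith
  have cI2: "card I \<le> card S" unfolding I_def using S by (intro card_mono) auto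
  have cIpos: "real (card I) > 0" using cI1 S by linarith
  have Xm: "X z \<in> borel_measurable M" if "z \<in> I" for z
  proof -
    have [measurable]: "W {x1,z} \<in> borel_measurable M" "W {x2,z} \<in> borel_measurable M"
      using meas up1 up2 that by auto
    show ?thesis unfolding X_def by measurable
  qed
  have indX: "indep_vars (\<lambda>_. borel) X I"
  proof -
    have 1: "indep_vars (\<lambda>j. PiM (K j) (\<lambda>_. borel)) (\<lambda>j \<omega>. restrict (\<lambda>i. W i \<omega>) (K j)) I"
    proof (rule indep_vars_restrict[OF ind])
      show "K j \<subseteq> unordered_pairs" if "j \<in> I" for j using up1 up2 that by (auto simp: K_def)
      show "disjoint_family_on K I"
        unfolding disjoint_family_on_def K_def I_def using x by (auto simp: doubleton_eq_iff)
    qed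
    have 2: "indep_vars (\<lambda>_. borel) (\<lambda>j \<omega>. (\<lambda>f::(int^'d) set \<Rightarrow> real. if f {x1,j} > 1/2 \<and> f {x2,j} > 1/2 then 1 else (0::real)) (restrict (\<lambda>i. W i \<omega>) (K j))) I"
    proof (rule indep_vars_compose2[OF 1])
      fix j assume "j \<in> I"
      have [measurable]: "(\<lambda>f::(int^'d) set \<Rightarrow> real. f {x1,j}) \<in> measurable (PiM (K j) (\<lambda>_. borel)) borel"
        "(\<lambda>f::(int^'d) set \<Rightarrow> real. f {x2,j}) \<in> measurable (PiM (K j) (\<lambda>_. borel)) borel"
        by (auto simp: K_def intro!: measurable_component_singleton)
      show "(\<lambda>f::(int^'d) set \<Rightarrow> real. if f {x1,j} > 1/2 \<and> f {x2,j} > 1/2 then 1 else (0::real)) \<in> measurable (PiM (K j) (\<lambda>_. borel)) borel"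
        by measurable
    qed
    show ?thesis
      by (rule indep_vars_cong[THEN iffD1, OF _ _ _ 2]) (auto simp: X_def K_def fun_eq_iff)
  qed
  define \<mu> where "\<mu> = (\<Sum>z\<in>I. expectation (X z))"
  interpret H: Hoeffding_ineq M I X "\<lambda>_. 0" "\<lambda>_. 1" \<mu>
  proof unfold_locales
    show "finite I" by (rule finI)
    show "indep_vars (\<lambda>_. borel) X I" by (rule indX)
    fix i assume "i \<in> I" show "AE x in M. X i x \<in> {0..1}" by (simp add: X_def)
  qed (simp add: \<mu>_def)
  have EX: "expectation (X z) \<ge> p^2" if "z \<in> I" for z
  proof -
    have ne: "{x1,z} \<noteq> {x2,z}" using x that by (auto simp: I_def doubleton_eq_iff)
    have "X z = indicator {\<omega>. W {x1,z} \<omega> > 1/2 \<and> W {x2,z} \<omega> > 1/2}"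
      by (auto simp: X_def fun_eq_iff indicator_def)
    then have "expectation (X z) = prob ({\<omega>. W {x1,z} \<omega> > 1/2 \<and> W {x2,z} \<omega> > 1/2} \<inter> space M)"
      by simp
    also have "{\<omega>. W {x1,z} \<omega> > 1/2 \<and> W {x2,z} \<omega> > 1/2} \<inter> space M = (\<Inter>i\<in>{{x1,z},{x2,z}}. W i -` {1/2<..} \<inter> space M)"
      by auto
    also have "prob \<dots> = (\<Prod>i\<in>{{x1,z},{x2,z}}. prob (W i -` {1/2<..} \<inter> space M))"
      by (rule indep_varsD[OF ind]) (use up1 up2 that in auto)
    also have "\<dots> = prob (W {x1,z} -` {1/2<..} \<inter> space M) * prob (W {x2,z} -` {1/2<..} \<inter> space M)"
      using ne by simp
    also have "W {x1,z} -` {1/2<..} \<inter> space M = {\<omega>\<in>space M. W {x1,z} \<omega> > 1/2}" by auto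
    also have "W {x2,z} -` {1/2<..} \<inter> space M = {\<omega>\<in>space M. W {x2,z} \<omega> > 1/2}" by auto
    finally have e: "expectation (X z) = prob {\<omega>\<in>space M. W {x1,z} \<omega> > 1/2} * prob {\<omega>\<in>space M. W {x2,z} \<omega> > 1/2}" .
    have "p * p \<le> prob {\<omega>\<in>space M. W {x1,z} \<omega> > 1/2} * prob {\<omega>\<in>space M. W {x2,z} \<omega> > 1/2}"
      using pe[OF up1[OF that]] pe[OF up2[OF that]] p by (intro mult_mono) auto
    then show ?thesis using e by (simp add: power2_eq_square)
  qed
  have mu: "\<mu> \<ge> real (card I) * p^2"
    unfolding \<mu>_def using sum_mono[of I "\<lambda>_. p^2" "\<lambda>z. expectation (X z)"] EX by simp
  define \<epsilon> where "\<epsilon> = p^2 * real (card S) / 2"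
  have sumX: "real (card {z\<in>S - {x1,x2}. W {x1,z} \<omega> > 1/2 \<and> W {x2,z} \<omega> > 1/2}) = (\<Sum>z\<in>I. X z \<omega>)" for \<omega>
    unfolding X_def I_def by (rule card_filter_sum) (use finI in \<open>simp add: I_def\<close>)
  have bad_eq: "bad = {\<omega>\<in>space M. (\<Sum>z\<in>I. X z \<omega>) < p^2/4 * real (card S)}"
    unfolding bad_def sumX ..
  have bad_ev: "bad \<in> events"
  proof -
    have "(\<lambda>\<omega>. \<Sum>z\<in>I. X z \<omega>) \<in> borel_measurable M" using Xm by (intro borel_measurable_sum) auto
    then show ?thesis unfolding bad_eq by measurable
  qed
  have sub: "bad \<subseteq> {\<omega>\<in>space M. (\<Sum>z\<in>I. X z \<omega>) \<le> \<mu> - \<epsilon>}"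
  proof -
    have "p^2 * real (card I) \<ge> p^2 * (real (card S) - 2)" using cI1 by (intro mult_left_mono) auto
    moreover have "p^2 * (real (card S) / 4 - 2) \<ge> 0" using S by (intro mult_nonneg_nonneg) auto
    ultimately have "p^2/4 * real (card S) \<le> \<mu> - \<epsilon>" using mu unfolding \<epsilon>_def by (simp add: algebra_simps)
    then show ?thesis unfolding bad_eq by auto
  qed
  have "prob bad \<le> prob {\<omega>\<in>space M. (\<Sum>z\<in>I. X z \<omega>) \<le> \<mu> - \<epsilon>}"
    using sub by (intro finite_measure_mono) auto
  also have "\<dots> \<le> exp (-2 * \<epsilon>\<^sup>2 / (\<Sum>i\<in>I. (1 - 0)\<^sup>2))"
    by (rule H.Hoeffding_ineq_le) (use p cIpos in \<open>auto simp: \<epsilon>_def\<close>)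
  also have "\<dots> \<le> exp (- (p^4 * real (card S) / 2))"
  proof -
    have s: "(\<Sum>i\<in>I. (1 - 0)\<^sup>2 :: real) = real (card I)" by simp
    have "p^4 * real (card S) / 2 * real (card I) \<le> p^4 * real (card S) / 2 * real (card S)"
      using cI2 by (intro mult_left_mono) auto
    also have "\<dots> = 2 * \<epsilon>^2" by (simp add: \<epsilon>_def power2_eq_square) (simp add: power4_eq_xxxx mult.assoc)
    finally have "p^4 * real (card S) / 2 \<le> 2 * \<epsilon>^2 / real (card I)"
      using cIpos by (simp add: field_simps)
    then show ?thesis unfolding s by simp
  qed
  finally show ?thesis using bad_ev by simp
qed



lemma ev_lnpowr: assumes "a > 0" shows "eventually (\<lambda>N. K \<le> ln (real N) powr a) sequentially"
proof -
  define T where "T = max K 1 powr (1/a)"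
  have T0: "T > 0" unfolding T_def by simp
  show ?thesis unfolding eventually_sequentially
  proof (intro exI[of _ "nat \<lceil>exp T\<rceil>"] allI impI)
    fix N assume "nat \<lceil>exp T\<rceil> \<le> N"
    then have eN: "exp T \<le> real N" by linarith
    have "0 < real N" using eN exp_gt_zero[of T] by linarith
    then have "T \<le> ln (real N)" using eN by (metis ln_exp ln_le_cancel_iff exp_gt_zero)
    then have "T powr a \<le> ln (real N) powr a" using T0 assms by (intro powr_mono2) auto
    moreover have "T powr a = max K 1" unfolding T_def using assms by (simp add: powr_powr)
    ultimately show "K \<le> ln (real N) powr a" by linarith
  qed
qed

lemma bound:
  fixes N d :: nat and c \<theta> s :: real
  assumes N: "3 \<le> N" and d: "1 \<le> d" and c: "c > 0" and th: "\<theta> > 0" and s: "s = \<theta> * d - 1"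
    and big: "6*d+4 \<le> c * ln (real N) powr s"
  shows "real ((2*N+2)^(3*d) * (2*N+3)) * exp (- (c * (ln (real N) powr \<theta>)^d)) \<le> inverse (real N ^ 2)"
proof -
  define l where "l = ln (real N)"
  have l0: "l > 0" unfolding l_def using N by simp
  have "(l powr \<theta>)^d = l powr (real d * \<theta>)" using l0 by (simp add: powr_power)
  also have "real d * \<theta> = 1 + s" using s by simp
  also have "l powr (1 + s) = l * l powr s" using l0 by (simp add: powr_add)
  finally have e1: "c * (l powr \<theta>)^d = l * (c * l powr s)" by simp
  have "l * (6*d+4) \<le> l * (c * l powr s)" using big l0 unfolding l_def by (intro mult_left_mono) auto
  then have E0: "exp (- (c * (l powr \<theta>)^d)) \<le> exp (- (real (6*d+4) * l))" unfolding e1 by (simp add: mult.commute)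
  have "exp (real (6*d+4) * l) = real N powr real (6*d+4)"
    unfolding l_def using N by (simp add: powr_def)
  also have "\<dots> = real N ^ (6*d+4)" using N by (intro powr_realpow) simp
  finally have ex: "exp (real (6*d+4) * l) = real N ^ (6*d+4)" .
  have E: "exp (- (c * (l powr \<theta>)^d)) \<le> inverse (real N ^ (6*d+4))"
    using E0 unfolding exp_minus[of "real (6*d+4) * l"] ex .
  have N3: "3*N \<le> N^2" using N unfolding power2_eq_square by (intro mult_right_mono) auto
  have "2*N+2 \<le> N^2" using N N3 by linarith
  then have "(2*N+2)^(3*d) \<le> (N^2)^(3*d)" by (rule power_mono) simp
  moreover have "2*N+3 \<le> N^2" using N N3 by linarith
  ultimately have "(2*N+2)^(3*d) * (2*N+3) \<le> (N^2)^(3*d) * N^2" by (rule mult_le_mono)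
  also have "(N^2)^(3*d) * N^2 = N^(2*(3*d)) * N^2" by (simp only: power_mult)
  also have "\<dots> = N^(2*(3*d) + 2)" by (simp only: power_add)
  also have "2*(3*d)+2 = 6*d+2" by simp
  finally have P: "real ((2*N+2)^(3*d) * (2*N+3)) \<le> real N ^ (6*d+2)" by (metis of_nat_le_iff of_nat_power)
  have "real ((2*N+2)^(3*d) * (2*N+3)) * exp (- (c * (l powr \<theta>)^d)) \<le> real N ^ (6*d+2) * inverse (real N ^ (6*d+4))"
    using P E by (intro mult_mono) auto
  also have "\<dots> = inverse (real N ^ 2)"
  proof -
    have e: "6*d+2+2 = 6*d+4" by simp
    have q: "real N ^ (6*d+4) = real N^(6*d+2) * real N^2"
      using power_add[of "real N" "6*d+2" 2] unfolding e .
    have N0: "real N ^ (6*d+2) \<noteq> 0" "real N ^ 2 \<noteq> 0" using N by auto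
    show ?thesis unfolding q using N0 by (simp add: field_simps)
  qed
  finally show ?thesis unfolding l_def .
qed

lemma (in prob_space) half_prob:
  assumes [measurable]: "W \<in> borel_measurable M" and ae: "AE \<omega> in M. 0 \<le> W \<omega> \<and> W \<omega> \<le> Mw"
    and E: "expectation W = 1" and Mw: "Mw > 0"
  shows "prob {\<omega>\<in>space M. W \<omega> > 1/2} \<ge> 1/(2*Mw)"
proof -
  define A where "A = {\<omega>\<in>space M. W \<omega> > 1/2}"
  have A[measurable]: "A \<in> events" unfolding A_def by measurable
  have iW: "integrable M W" by (rule integrable_const_bound[where B=Mw]) (use ae in auto)
  have iG: "integrable M (\<lambda>\<omega>. 1/2 + Mw * indicator A \<omega>)" by (intro Bochner_Integration.integrable_add integrable_mult_right integrable_real_indicator integrable_const) (auto simp: A less_top[symmetric])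
  have "expectation W \<le> expectation (\<lambda>\<omega>. 1/2 + Mw * indicator A \<omega>)"
  proof (rule integral_mono_AE[OF iW iG])
    show "AE \<omega> in M. W \<omega> \<le> 1/2 + Mw * indicator A \<omega>"
      using ae AE_space by eventually_elim (auto simp: A_def indicator_def)
  qed
  also have "\<dots> = expectation (\<lambda>_. 1/2) + expectation (\<lambda>\<omega>. Mw * indicator A \<omega>)"
    by (rule Bochner_Integration.integral_add) (auto simp: A less_top[symmetric] intro!: integrable_mult_right integrable_real_indicator)
  also have "\<dots> = 1/2 + Mw * prob A" by (simp add: prob_space)
  finally have "1/2 \<le> Mw * prob A" using E by simp
  then show ?thesis using Mw unfolding A_def[symmetric] by (simp add: field_simps)
qed

lemma (in prob_space) main_theta:
  fixes W :: "(int^'d) set \<Rightarrow> 'a \<Rightarrow> real" and p \<theta> :: real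
  assumes meas: "\<And>e. e \<in> unordered_pairs \<Longrightarrow> W e \<in> borel_measurable M"
    and ind: "indep_vars (\<lambda>_. borel) W unordered_pairs"
    and pe: "\<And>e. e \<in> unordered_pairs \<Longrightarrow> prob {\<omega>\<in>space M. W e \<omega> > 1/2} \<ge> p"
    and p: "0 < p"
    and th: "\<theta> > 1 / real CARD('d)"
  shows "\<exists>R\<^sub>0 :: 'a \<Rightarrow> ereal. R\<^sub>0 \<in> borel_measurable M \<and> (\<forall>\<omega>. 1 \<le> R\<^sub>0 \<omega>) \<and>
         (AE \<omega> in M. R\<^sub>0 \<omega> < \<infinity>) \<and>
         (AE \<omega> in M. \<forall>R::real. ereal R > R\<^sub>0 \<omega> \<longrightarrow>
            (\<forall>x1 \<in> box R 0. \<forall>x2 \<in> box R 0. \<forall>y \<in> box R 0. \<forall>r::real.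
               x1 \<noteq> x2 \<longrightarrow> (ln R) powr \<theta> \<le> r \<longrightarrow> r \<le> R \<longrightarrow>
               real (card (Bdelta (\<lambda>e. W e \<omega>) r (1/2) x1 x2 y))
                 \<ge> p^2/4 * real (card (box r y))))"
proof -
  define d where "d = CARD('d)"
  have d1: "1 \<le> d" unfolding d_def by (simp add: Suc_le_eq)
  have dpos: "0 < real d" using d1 by simp
  have "0 < 1 / real d" using dpos by simp
  then have th0: "\<theta> > 0" using th unfolding d_def[symmetric] by linarith
  define s where "s = \<theta> * real d - 1"
  have "1 < \<theta> * real d" using th dpos unfolding d_def[symmetric] by (simp add: divide_less_eq)
  then have s0: "s > 0" unfolding s_def by simp
  define c where "c = p^4/2"
  have c0: "c > 0" unfolding c_def using p by simp
  define L where "L = (\<lambda>N::nat. ln (real N) powr \<theta>)"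
  have ev: "eventually (\<lambda>N. 3 \<le> N \<and> 8 \<le> L N \<and> 6 * real d + 4 \<le> c * ln (real N) powr s) sequentially"
    using eventually_ge_at_top[of "3::nat"] ev_lnpowr[OF th0, of 8] ev_lnpowr[OF s0, of "(6 * real d + 4)/c"]
  proof eventually_elim
    case (elim N)
    then show ?case using c0 by (simp add: L_def pos_divide_le_eq mult.commute)
  qed
  then obtain N1 where N1: "\<And>N. N1 \<le> N \<Longrightarrow> 3 \<le> N \<and> 8 \<le> L N \<and> 6 * real d + 4 \<le> c * ln (real N) powr s"
    unfolding eventually_sequentially by blast
  have N13: "3 \<le> N1" using N1[of N1] by simp
  define B where "B = (\<lambda>N::nat. box (real N + 1) (0::int^'d))"
  define badc where "badc = (\<lambda>(x1::int^'d, x2::int^'d, y::int^'d, m::nat).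
     {\<omega>\<in>space M. real (card (Bdelta (\<lambda>e. W e \<omega>) (real m/2) (1/2) x1 x2 y)) < p^2/4 * real (card (box (real m/2) y))})"
  define C where "C = (\<lambda>N::nat. {(x1,x2,y,m). x1 \<in> B N \<and> x2 \<in> B N \<and> y \<in> B N \<and> x1 \<noteq> x2 \<and> m \<in> {nat \<lfloor>L N\<rfloor> + 1 .. 2*N+2}})"
  define A where "A = (\<lambda>N. if N1 \<le> N then (\<Union>c\<in>C N. badc c) else {})"
  have Bhalf: "B N = box (real (2*N+2) / 2) 0" for N
  proof -
    have e: "real (2*N+2) / 2 = real N + 1" by simp
    show ?thesis unfolding B_def e ..
  qed
  have cardB: "card (B N) = (2*N+2)^d" for N unfolding Bhalf d_def by (rule card_box_half)
  have CS: "C N \<subseteq> B N \<times> B N \<times> B N \<times> {nat \<lfloor>L N\<rfloor> + 1 .. 2*N+2}" for N unfolding C_def by auto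
  have finB: "finite (B N)" for N unfolding B_def by (rule finite_box)
  have finC: "finite (C N)" for N using CS by (rule finite_subset) (simp add: finB)
  have cardC: "card (C N) \<le> (2*N+2)^(3*d) * (2*N+3)" for N
  proof -
    have "card (C N) \<le> card (B N \<times> B N \<times> B N \<times> {nat \<lfloor>L N\<rfloor> + 1 .. 2*N+2})"
      using CS by (rule card_mono[rotated]) (simp add: finB)
    also have "\<dots> = card (B N) * (card (B N) * (card (B N) * card {nat \<lfloor>L N\<rfloor> + 1 .. 2*N+2}))"
      by (simp add: card_cartesian_product)
    also have "card {nat \<lfloor>L N\<rfloor> + 1 .. 2*N+2} \<le> 2*N+3" by simp
    then have "card (B N) * (card (B N) * (card (B N) * card {nat \<lfloor>L N\<rfloor> + 1 .. 2*N+2})) \<le> card (B N) * (card (B N) * (card (B N) * (2*N+3)))"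
      by (intro mult_le_mono order_refl)
    also have "\<dots> = ((2*N+2)^d)^3 * (2*N+3)" unfolding cardB by (simp add: power3_eq_cube)
    also have "((2*N+2)^d)^3 = (2*N+2)^(3*d)" by (simp add: power_mult[symmetric] mult.commute)
    finally show ?thesis .
  qed
  have badc_bound: "badc c' \<in> events \<and> prob (badc c') \<le> exp (- (c * L N ^ d))" if N: "N1 \<le> N" and c': "c' \<in> C N" for N c'
  proof -
    obtain x1 x2 y m where c'e: "c' = (x1,x2,y,m)" by (cases c') auto
    have x: "x1 \<noteq> x2" and m: "nat \<lfloor>L N\<rfloor> + 1 \<le> m" using c' unfolding c'e C_def by auto
    have L8: "8 \<le> L N" using N1[OF N] by simp
    have mL: "L N < real m" using m L8 by linarith
    have m1: "1 \<le> real m" using mL L8 by linarith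
    have cS: "real (card (box (real m/2) y)) = real m ^ d" unfolding card_box_half d_def by simp
    have "real m \<le> real m ^ d" using m1 d1 by (intro self_le_power) auto
    then have cS8: "8 \<le> real (card (box (real m/2) y))" unfolding cS using mL L8 by linarith
    have K: "{\<omega>\<in>space M. real (card {z\<in>box (real m/2) y - {x1,x2}. W {x1,z} \<omega> > 1/2 \<and> W {x2,z} \<omega> > 1/2}) < p^2/4 * real (card (box (real m/2) y))} \<in> events \<and>
        prob {\<omega>\<in>space M. real (card {z\<in>box (real m/2) y - {x1,x2}. W {x1,z} \<omega> > 1/2 \<and> W {x2,z} \<omega> > 1/2}) < p^2/4 * real (card (box (real m/2) y))} \<le> exp (- (p^4 * real (card (box (real m/2) y)) / 2))"
      by (rule key[OF meas ind pe p x finite_box cS8])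
    have be: "badc c' = {\<omega>\<in>space M. real (card {z\<in>box (real m/2) y - {x1,x2}. W {x1,z} \<omega> > 1/2 \<and> W {x2,z} \<omega> > 1/2}) < p^2/4 * real (card (box (real m/2) y))}"
      unfolding c'e badc_def Bdelta_def by simp
    have "L N ^ d \<le> real m ^ d" using mL L8 by (intro power_mono) auto
    then have "c * L N ^ d \<le> p^4 * real (card (box (real m/2) y)) / 2" unfolding cS c_def using p
      by (simp add: mult_left_mono divide_right_mono)
    then have "exp (- (p^4 * real (card (box (real m/2) y)) / 2)) \<le> exp (- (c * L N ^ d))" by simp
    then show ?thesis using K unfolding be by linarith
  qed
  have A_ev: "A N \<in> events" for N
    unfolding A_def using badc_bound finC by (auto intro!: sets.finite_UN)
  have A_bound: "measure M (A N) \<le> inverse (real N ^ 2)" for N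
  proof (cases "N1 \<le> N")
    case True
    have "measure M (A N) = measure M (\<Union>c\<in>C N. badc c)" unfolding A_def using True by simp
    also have "\<dots> \<le> (\<Sum>c\<in>C N. measure M (badc c))"
      by (rule finite_measure_subadditive_finite[OF finC]) (use badc_bound True in auto)
    also have "\<dots> \<le> real (card (C N)) * exp (- (c * L N ^ d))"
      by (rule sum_bounded_above) (use badc_bound True in auto)
    also have "\<dots> \<le> real ((2*N+2)^(3*d) * (2*N+3)) * exp (- (c * L N ^ d))"
      by (intro mult_right_mono) (use cardC in \<open>auto simp del: of_nat_mult of_nat_power of_nat_add\<close>)
    also have "\<dots> \<le> inverse (real N ^ 2)" unfolding L_def
      by (rule bound[OF _ d1 c0 th0 s_def]) (use N1[OF True] in auto)
    finally show ?thesis .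
  next
    case False
    then show ?thesis unfolding A_def by simp
  qed
  have summ: "summable (\<lambda>N. measure M (A N))"
    by (rule summable_comparison_test'[where N=0, OF inverse_power_summable[of 2]]) (use A_bound in auto)
  have BC: "AE \<omega> in M. eventually (\<lambda>N. \<omega> \<in> space M - A N) sequentially"
    by (rule borel_cantelli_AE1[OF A_ev _ summ]) (simp add: less_top[symmetric])
  define G where "G = (\<lambda>n. {\<omega>\<in>space M. N1 \<le> n \<and> (\<forall>N\<ge>n. \<omega> \<notin> A N)})"
  have G_ev: "G n \<in> events" for n
  proof -
    have "G n = (if N1 \<le> n then space M - (\<Union>N\<in>{n..}. A N) else {})" unfolding G_def by auto
    then show ?thesis using A_ev by auto
  qed
  define R0 where "R0 = (\<lambda>\<omega>. INF n. (if \<omega> \<in> G n then ereal (real n) else \<infinity>))"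
  have R0m: "R0 \<in> borel_measurable M"
    unfolding R0_def
  proof (rule borel_measurable_INF)
    fix n :: nat
    show "(\<lambda>\<omega>. if \<omega> \<in> G n then ereal (real n) else \<infinity>) \<in> borel_measurable M"
      by (rule measurable_If_set) (use G_ev in auto)
  qed simp
  have R01: "1 \<le> R0 \<omega>" for \<omega>
    unfolding R0_def
  proof (rule INF_greatest)
    fix n assume "n \<in> (UNIV::nat set)"
    show "1 \<le> (if \<omega> \<in> G n then ereal (real n) else \<infinity>)"
      using N13 by (auto simp: G_def)
  qed
  have AEfin: "AE \<omega> in M. R0 \<omega> < \<infinity>"
    using BC
  proof (rule AE_mp)
    show "AE \<omega> in M. eventually (\<lambda>N. \<omega> \<in> space M - A N) sequentially \<longrightarrow> R0 \<omega> < \<infinity>"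
    proof (rule AE_I2, rule impI)
      fix \<omega> assume \<omega>: "\<omega> \<in> space M" and "eventually (\<lambda>N. \<omega> \<in> space M - A N) sequentially"
      then obtain n0 where n0: "\<And>N. n0 \<le> N \<Longrightarrow> \<omega> \<in> space M - A N" unfolding eventually_sequentially by blast
      define n where "n = max n0 N1"
      have "\<omega> \<in> G n" unfolding G_def n_def using \<omega> n0 by auto
      then have "R0 \<omega> \<le> ereal (real n)" unfolding R0_def by (intro INF_lower2[of n]) auto
      moreover have "ereal (real n) < \<infinity>" by simp
      ultimately show "R0 \<omega> < \<infinity>" by (rule le_less_trans)
    qed
  qed
  have AEmain: "AE \<omega> in M. \<forall>R::real. ereal R > R0 \<omega> \<longrightarrow>
            (\<forall>x1 \<in> box R 0. \<forall>x2 \<in> box R 0. \<forall>y \<in> box R 0. \<forall>r::real.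
               x1 \<noteq> x2 \<longrightarrow> (ln R) powr \<theta> \<le> r \<longrightarrow> r \<le> R \<longrightarrow>
               real (card (Bdelta (\<lambda>e. W e \<omega>) r (1/2) x1 x2 y))
                 \<ge> p^2/4 * real (card (box r y)))"
  proof (rule AE_I2, intro allI impI ballI)
    fix \<omega> R x1 x2 y r
    assume \<omega>: "\<omega> \<in> space M" and R: "R0 \<omega> < ereal R" and x1: "x1 \<in> box R (0::int^'d)"
      and x2: "x2 \<in> box R (0::int^'d)" and y: "y \<in> box R (0::int^'d)" and x12: "x1 \<noteq> x2"
      and rl: "ln R powr \<theta> \<le> r" and rR: "r \<le> R"
    obtain n where "(if \<omega> \<in> G n then ereal (real n) else \<infinity>) < ereal R"
      using R unfolding R0_def INF_less_iff by blast
    then have nG: "\<omega> \<in> G n" and nR: "real n < R" by (auto split: if_splits)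
    have nN1: "N1 \<le> n" and nA: "\<And>N. n \<le> N \<Longrightarrow> \<omega> \<notin> A N" using nG unfolding G_def by auto
    define N where "N = nat \<lceil>R\<rceil> - 1"
    have "int n < \<lceil>R\<rceil>" using nR by (simp add: less_ceiling_iff)
    then have Nn: "n \<le> N" and NR: "real N < R" and RN: "R \<le> real N + 1"
      unfolding N_def using ceiling_correct[of R] by linarith+
    have NN1: "N1 \<le> N" using Nn nN1 by simp
    have N3: "3 \<le> N" and L8: "8 \<le> L N" using N1[OF NN1] by auto
    have "ln (real N) < ln R" using N3 NR by (intro ln_less_cancel_iff[THEN iffD2]) auto
    then have "L N < ln R powr \<theta>" unfolding L_def using N3 th0 by (intro powr_less_mono2) auto
    then have rL: "L N < r" using rl by linarith
    have r0: "0 \<le> r" using rL L8 by linarith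
    define m where "m = nat (\<lfloor>r\<rfloor> + \<lceil>r\<rceil>)"
    have fl1: "\<lfloor>r\<rfloor> \<le> int N + 1" using rR RN by (simp add: floor_le_iff)
    have ce1: "\<lceil>r\<rceil> \<le> int N + 1" using rR RN by (simp add: ceiling_le_iff)
    have fl2: "\<lfloor>L N\<rfloor> \<le> \<lfloor>r\<rfloor>" using rL by (intro floor_mono) simp
    have ce2: "1 \<le> \<lceil>r\<rceil>" using rL L8 by simp
    have fl0: "0 \<le> \<lfloor>L N\<rfloor>" using L8 by simp
    have i1: "int (nat \<lfloor>L N\<rfloor> + 1) = \<lfloor>L N\<rfloor> + 1" using fl0 by simp
    have mlo: "nat \<lfloor>L N\<rfloor> + 1 \<le> m" unfolding m_def
      by (rule le_nat_iff[THEN iffD2]) (use fl0 fl2 ce2 i1 in linarith)+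
    have mhi: "m \<le> 2*N+2" unfolding m_def nat_le_iff using fl1 ce1 by simp
    have mC: "m \<in> {nat \<lfloor>L N\<rfloor> + 1 .. 2*N+2}" using mlo mhi by simp
    have BN: "box R 0 \<subseteq> B N" unfolding B_def by (rule box_mono[OF RN])
    have "(x1,x2,y,m) \<in> C N" unfolding C_def using x1 x2 y BN x12 mC by auto
    then have "\<omega> \<notin> badc (x1,x2,y,m)" using nA[OF Nn] NN1 unfolding A_def by auto
    then have "p^2/4 * real (card (box (real m/2) y)) \<le> real (card (Bdelta (\<lambda>e. W e \<omega>) (real m/2) (1/2) x1 x2 y))"
      using \<omega> unfolding badc_def by auto
    moreover have "box r y = box (real m/2) y" unfolding m_def by (rule box_eq_half[OF r0])
    moreover have "Bdelta (\<lambda>e. W e \<omega>) r (1/2) x1 x2 y = Bdelta (\<lambda>e. W e \<omega>) (real m/2) (1/2) x1 x2 y"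
      unfolding Bdelta_def \<open>box r y = box (real m/2) y\<close> ..
    ultimately show "p^2/4 * real (card (box r y)) \<le> real (card (Bdelta (\<lambda>e. W e \<omega>) r (1/2) x1 x2 y))"
      by simp
  qed
  show ?thesis using R0m R01 AEfin AEmain by blast
qed

theorem lemma2p1:
  fixes P :: "'a measure" and W :: "(int^'d) set \<Rightarrow> 'a \<Rightarrow> real" and Mw :: real
  assumes "prob_space P"
    and "Mw > 0"
    and "\<And>e. e \<in> unordered_pairs \<Longrightarrow> W e \<in> borel_measurable P"
    and "prob_space.indep_vars P (\<lambda>_. borel) W unordered_pairs"
    and "\<And>e e'. e \<in> unordered_pairs \<Longrightarrow> e' \<in> unordered_pairs \<Longrightarrow>
           distr P borel (W e) = distr P borel (W e')"
    and "\<And>e. e \<in> unordered_pairs \<Longrightarrow> AE \<omega> in P. 0 \<le> W e \<omega> \<and> W e \<omega> \<le> Mw"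
    and "\<And>e. e \<in> unordered_pairs \<Longrightarrow> integral\<^sup>L P (W e) = 1"
  shows "\<exists>\<kappa> \<delta>\<^sub>0::real. 0 < \<kappa> \<and> \<kappa> \<le> 1 \<and> 0 < \<delta>\<^sub>0 \<and> \<delta>\<^sub>0 \<le> 1 \<and>
    (\<forall>\<theta>::real. \<theta> > 1 / real CARD('d) \<longrightarrow>
      (\<exists>R\<^sub>0 :: 'a \<Rightarrow> ereal. R\<^sub>0 \<in> borel_measurable P \<and> (\<forall>\<omega>. 1 \<le> R\<^sub>0 \<omega>) \<and>
         (AE \<omega> in P. R\<^sub>0 \<omega> < \<infinity>) \<and>
         (AE \<omega> in P. \<forall>R::real. ereal R > R\<^sub>0 \<omega> \<longrightarrow>
            (\<forall>x1 \<in> box R 0. \<forall>x2 \<in> box R 0. \<forall>y \<in> box R 0. \<forall>r::real.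
               x1 \<noteq> x2 \<longrightarrow> (ln R) powr \<theta> \<le> r \<longrightarrow> r \<le> R \<longrightarrow>
               real (card (Bdelta (\<lambda>e. W e \<omega>) r \<delta>\<^sub>0 x1 x2 y))
                 \<ge> \<kappa> * real (card (box r y))))))"
proof -
  interpret prob_space P by fact
  define p where "p = min (1/(2*Mw)) 1"
  have p0: "0 < p" unfolding p_def using assms(2) by simp
  have p1: "p \<le> 1" unfolding p_def by simp
  have pe: "prob {\<omega>\<in>space P. W e \<omega> > 1/2} \<ge> p" if e: "e \<in> unordered_pairs" for e
  proof -
    have "1/(2*Mw) \<le> prob {\<omega>\<in>space P. W e \<omega> > 1/2}"
      by (rule half_prob[OF assms(3)[OF e] assms(6)[OF e] assms(7)[OF e] assms(2)])
    then show ?thesis unfolding p_def by linarith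
  qed
  have "p^2 \<le> 1" using p0 p1 by (intro power_le_one) auto
  then have k1: "p^2/4 \<le> 1" by simp
  have k0: "0 < p^2/4" using p0 by simp
  have h0: "0 < (1/2::real)" by simp
  have h1: "(1/2::real) \<le> 1" by simp
  have main: "\<forall>\<theta>::real. \<theta> > 1 / real CARD('d) \<longrightarrow> (\<exists>R\<^sub>0 :: 'a \<Rightarrow> ereal. R\<^sub>0 \<in> borel_measurable P \<and> (\<forall>\<omega>. 1 \<le> R\<^sub>0 \<omega>) \<and>
         (AE \<omega> in P. R\<^sub>0 \<omega> < \<infinity>) \<and>
         (AE \<omega> in P. \<forall>R::real. ereal R > R\<^sub>0 \<omega> \<longrightarrow>
            (\<forall>x1 \<in> box R 0. \<forall>x2 \<in> box R 0. \<forall>y \<in> box R 0. \<forall>r::real.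
               x1 \<noteq> x2 \<longrightarrow> (ln R) powr \<theta> \<le> r \<longrightarrow> r \<le> R \<longrightarrow>
               real (card (Bdelta (\<lambda>e. W e \<omega>) r (1/2) x1 x2 y))
                 \<ge> p^2/4 * real (card (box r y)))))"
  proof (intro allI impI)
    fix \<theta> :: real assume th: "\<theta> > 1 / real CARD('d)"
    show "\<exists>R\<^sub>0 :: 'a \<Rightarrow> ereal. R\<^sub>0 \<in> borel_measurable P \<and> (\<forall>\<omega>. 1 \<le> R\<^sub>0 \<omega>) \<and>
         (AE \<omega> in P. R\<^sub>0 \<omega> < \<infinity>) \<and>
         (AE \<omega> in P. \<forall>R::real. ereal R > R\<^sub>0 \<omega> \<longrightarrow>
            (\<forall>x1 \<in> box R 0. \<forall>x2 \<in> box R 0. \<forall>y \<in> box R 0. \<forall>r::real.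
               x1 \<noteq> x2 \<longrightarrow> (ln R) powr \<theta> \<le> r \<longrightarrow> r \<le> R \<longrightarrow>
               real (card (Bdelta (\<lambda>e. W e \<omega>) r (1/2) x1 x2 y))
                 \<ge> p^2/4 * real (card (box r y))))"
      by (rule main_theta[OF assms(3) assms(4) pe p0 th])
  qed
  show ?thesis
    by (rule exI[of _ "p^2/4"], rule exI[of _ "1/2::real"], intro conjI, fact k0, fact k1, fact h0, fact h1, fact main)
qed

end
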